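(* Let $n\ge 2$. If $\beta=(b_1,\dots,b_n)\in PF_{n,n-1}\setminus PF_{n,n-2}$, then $b_n=n$.
   Context: For $n\in\mathbb{N}$ let $[n]=\{1,\dots,n\}$ and $PP_n=[n]^n$. For an integer $k\ge 0$, the $k$-Naples parking rule: there are $n$ spots numbered $1,\dots,n$ west to east, initially empty; cars $c_1,\dots,c_n$ arrive in order, car $c_i$ preferring spot $b_i$. If spot $b_i$ is empty, $c_i$ parks there. Otherwise $c_i$ checks spots $b_i-1,\dots,b_i-k$ in this order (skipping those $<1$) and parks in the first empty one; if all are occupied, it drives east and parks in the first empty spot numbered greater than $b_i$, failing to park if none exists. $PF_{n,k}$ is the set of $\beta\in PP_n$ for which all cars park. *)

theory Defs
  imports Main
begin

definition PP :: "nat \<Rightarrow> nat list set" where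
  "PP n = {bs. length bs = n \<and> (\<forall>b\<in>set bs. b \<in> {1..n})}"

text \<open>One step of the k-Naples rule with n spots. The state is the set of occupied
 spots, or None if some car has failed to park.\<close>
definition naples_step :: "nat \<Rightarrow> nat \<Rightarrow> nat \<Rightarrow> nat set option \<Rightarrow> nat set option" where
  "naples_step n k b st = (case st of None \<Rightarrow> None | Some S \<Rightarrow>
     if b \<notin> S then Some (insert b S)
     else if (\<exists>j. 1 \<le> j \<and> j \<le> k \<and> j < b \<and> b - j \<notin> S)
       then Some (insert (b - (LEAST j. 1 \<le> j \<and> j \<le> k \<and> j < b \<and> b - j \<notin> S)) S)
     else if (\<exists>s. b < s \<and> s \<le> n \<and> s \<notin> S)
       then Some (insert (LEAST s. b < s \<and> s \<le> n \<and> s \<notin> S) S)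
     else None)"

definition naples_park :: "nat \<Rightarrow> nat \<Rightarrow> nat list \<Rightarrow> nat set option" where
  "naples_park n k bs = fold (naples_step n k) bs (Some {})"

definition PF :: "nat \<Rightarrow> nat \<Rightarrow> nat list set" where
  "PF n k = {bs \<in> PP n. naples_park n k bs \<noteq> None}"

end

theory Submission
  imports Defs
begin

lemma stepA:
  assumes "S \<subseteq> {1..n}" "card S < n" "b \<in> {1..n}"
  shows "\<exists>S'. naples_step n (n-1) b (Some S) = Some S' \<and> S' \<subseteq> {1..n} \<and> card S' = Suc (card S)"
proof -
  have fin: "finite S" using assms(1) finite_subset by blast
  show ?thesis
  proof (cases "b \<in> S")
    case False
    then show ?thesis using assms fin by (auto simp: naples_step_def)
  next
    case bS: True
    show ?thesis
    proof (cases "\<exists>j. 1 \<le> j \<and> j \<le> n-1 \<and> j < b \<and> b - j \<notin> S")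
      case True
      define m where "m = (LEAST j. 1 \<le> j \<and> j \<le> n-1 \<and> j < b \<and> b - j \<notin> S)"
      have "1 \<le> m \<and> m \<le> n-1 \<and> m < b \<and> b - m \<notin> S"
        unfolding m_def using True by (rule LeastI_ex)
      moreover have "naples_step n (n-1) b (Some S) = Some (insert (b-m) S)"
        unfolding naples_step_def m_def using bS True by simp
      ultimately show ?thesis using assms fin by auto
    next
      case nj: False
      have "\<not> {1..n} \<subseteq> S" using assms(2) fin
        by (metis card_atLeastAtMost card_mono diff_Suc_1 finite_atLeastAtMost not_le)
      then obtain t where t: "t \<in> {1..n}" "t \<notin> S" by blast
      have "\<not> t < b"
      proof
        assume "t < b"
        then have "1 \<le> b - t \<and> b - t \<le> n-1 \<and> b - t < b \<and> b - (b - t) \<notin> S"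
          using t assms(3) by auto
        then show False using nj by blast
      qed
      then have tb: "b < t" using t bS by (cases "t = b") auto
      have ex: "\<exists>s. b < s \<and> s \<le> n \<and> s \<notin> S" using t tb by auto
      define m where "m = (LEAST s. b < s \<and> s \<le> n \<and> s \<notin> S)"
      have "b < m \<and> m \<le> n \<and> m \<notin> S" unfolding m_def using ex by (rule LeastI_ex)
      moreover have "naples_step n (n-1) b (Some S) = Some (insert m S)"
        unfolding naples_step_def m_def using bS nj ex by auto
      ultimately show ?thesis using assms fin by auto
    qed
  qed
qed

lemma stepB:
  assumes "S \<subseteq> {1..n}" "b \<in> {1..n}" "n \<ge> 2"
    and "\<not> (b = n \<and> b \<in> S \<and> {2..n} \<subseteq> S)"
  shows "naples_step n (n-2) b (Some S) = naples_step n (n-1) b (Some S)"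
proof (cases "b \<in> S")
  case False
  then show ?thesis by (simp add: naples_step_def)
next
  case bS: True
  show ?thesis
  proof (cases "b < n")
    case True
    have "(\<lambda>j. 1 \<le> j \<and> j \<le> n-2 \<and> j < b \<and> b - j \<notin> S) = (\<lambda>j. 1 \<le> j \<and> j \<le> n-1 \<and> j < b \<and> b - j \<notin> S)"
      using True by (auto intro!: ext)
    then show ?thesis unfolding naples_step_def by (simp only: option.case)
  next
    case False
    then have bn: "b = n" using assms(2) by auto
    then obtain t where t: "t \<in> {2..n}" "t \<notin> S" using assms(4) bS by blast
    then have tn: "t < n" using bS bn by (cases "t = n") auto
    define P1 where "P1 = (\<lambda>j. 1 \<le> j \<and> j \<le> n-1 \<and> j < b \<and> b - j \<notin> S)"
    define P2 where "P2 = (\<lambda>j. 1 \<le> j \<and> j \<le> n-2 \<and> j < b \<and> b - j \<notin> S)"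
    have p2t: "P2 (n - t)" using t tn bn unfolding P2_def by auto
    have p1t: "P1 (n - t)" using t tn bn unfolding P1_def by auto
    have e1: "\<exists>j. P1 j" using p1t by blast
    have e2: "\<exists>j. P2 j" using p2t by blast
    define m where "m = Least P1"
    have pm: "P1 m" unfolding m_def using e1 by (rule LeastI_ex)
    have "m \<le> n - t" unfolding m_def using p1t by (rule Least_le)
    then have "P2 m" using pm t unfolding P1_def P2_def by auto
    moreover have "\<And>y. P2 y \<Longrightarrow> m \<le> y" unfolding m_def
      by (rule Least_le) (auto simp: P1_def P2_def)
    ultimately have "Least P2 = m" by (rule Least_equality)
    then have L: "(LEAST j. 1 \<le> j \<and> j \<le> n-2 \<and> j < b \<and> b - j \<notin> S) = (LEAST j. 1 \<le> j \<and> j \<le> n-1 \<and> j < b \<and> b - j \<notin> S)"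
      by (simp add: m_def P1_def P2_def)
    have E2: "\<exists>j. 1 \<le> j \<and> j \<le> n-2 \<and> j < b \<and> b - j \<notin> S" using e2 by (simp add: P2_def)
    have E1: "\<exists>j. 1 \<le> j \<and> j \<le> n-1 \<and> j < b \<and> b - j \<notin> S" using e1 by (simp add: P1_def)
    show ?thesis unfolding naples_step_def option.case L using E1 E2 bS by (simp only: if_True if_False not_True_eq_False)
  qed
qed

lemma stepNone: "naples_step n k b None = None"
  by (simp add: naples_step_def)

lemma foldNone: "fold (naples_step n k) xs None = None"
  by (induction xs) (auto simp: stepNone)

lemma main:
  assumes "n \<ge> 2"
  shows "S \<subseteq> {1..n} \<Longrightarrow> card S + length xs \<le> n \<Longrightarrow> set xs \<subseteq> {1..n}
    \<Longrightarrow> fold (naples_step n (n-2)) xs (Some S) = None \<Longrightarrow> xs \<noteq> [] \<and> last xs = n"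
proof (induction xs arbitrary: S)
  case Nil
  then show ?case by simp
next
  case (Cons b xs)
  have fin: "finite S" using Cons.prems(1) finite_subset by blast
  have b: "b \<in> {1..n}" using Cons.prems(3) by auto
  show ?case
  proof (cases "b = n \<and> b \<in> S \<and> {2..n} \<subseteq> S")
    case True
    have "card {2..n} \<le> card S" using True fin by (intro card_mono) auto
    then have "n - 1 \<le> card S" by simp
    moreover have "card S + Suc (length xs) \<le> n" using Cons.prems(2) by simp
    ultimately have "length xs = 0" using assms by arith
    then have "xs = []" by blast
    then show ?thesis using True by simp
  next
    case False
    have cS: "card S < n" using Cons.prems(2) by simp
    obtain S' where S': "naples_step n (n-1) b (Some S) = Some S'" "S' \<subseteq> {1..n}"
      "card S' = Suc (card S)" using stepA[OF Cons.prems(1) cS b] by blast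
    have g: "naples_step n (n-2) b (Some S) = Some S'"
      using stepB[OF Cons.prems(1) b assms False] S'(1) by simp
    have "fold (naples_step n (n-2)) xs (Some S') = None" using Cons.prems(4) g by simp
    moreover have "card S' + length xs \<le> n" using Cons.prems(2) S'(3) by simp
    ultimately have "xs \<noteq> [] \<and> last xs = n" using Cons.IH[OF S'(2)] Cons.prems(3) by auto
    then show ?thesis by simp
  qed
qed

theorem lemma2p2:
  fixes n :: nat and bs :: "nat list"
  assumes "n \<ge> 2"
    and "bs \<in> PF n (n - 1) - PF n (n - 2)"
  shows "bs ! (n - 1) = n"
proof -
  have pp: "bs \<in> PP n" using assms(2) by (simp add: PF_def)
  then have len: "length bs = n" and st: "set bs \<subseteq> {1..n}" by (auto simp: PP_def)
  have "naples_park n (n-2) bs = None" using assms(2) pp by (simp add: PF_def)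
  then have "fold (naples_step n (n-2)) bs (Some {}) = None" by (simp add: naples_park_def)
  then have "bs \<noteq> [] \<and> last bs = n" using main[OF assms(1), of "{}" bs] len st by simp
  then show ?thesis using len last_conv_nth by metis
qed

end
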